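(* Let $X=\bigsqcup_{\lambda\in\Lambda}G_\lambda$ be an MCQ, $R$ a ring and $M$ a left $R$-module. For every 6-tuple $(f_1,f_2,f_3,f_4;\phi_1,\phi_2)$ of maps ($f_1,f_2:X\times X\to R$, $f_3,f_4:\bigsqcup_\lambda(G_\lambda\times G_\lambda)\to R$, $\phi_1:X\times X\to M$, $\phi_2:\bigsqcup_\lambda(G_\lambda\times G_\lambda)\to M$) satisfying conditions (0-i)–(4-$\phi$), there exists an augmented MCQ Alexander pair $(g_1,g_2;\psi_1,\psi_2)$ (with $g_1,g_2:X\times X\to R$, $\psi_1:X\times X\to M$, $\psi_2:\bigsqcup_\lambda(G_\lambda\times G_\lambda)\to M$) such that the MCQs $\widetilde X(f_1,f_2,f_3,f_4;\phi_1,\phi_2)$ and $\widetilde X(g_1,g_2;\psi_1,\psi_2)$ are isomorphic.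
   Context: A multiple conjugation quandle (MCQ) is a set $X=\bigsqcup_{\lambda\in\Lambda}G_\lambda$ that is a disjoint union of groups $G_\lambda$, together with a binary operation $\triangleleft:X\times X\to X$ such that: (i) for all $a,b\in G_\lambda$, $a\triangleleft b=b^{-1}ab$; (ii) for all $x\in X$ and $a,b\in G_\lambda$, $x\triangleleft e_\lambda=x$ and $x\triangleleft(ab)=(x\triangleleft a)\triangleleft b$, where $e_\lambda$ is the identity of $G_\lambda$; (iii) for all $x,y,z\in X$, $(x\triangleleft y)\triangleleft z=(x\triangleleft z)\triangleleft(y\triangleleft z)$; (iv) for all $x\in X$ and $a,b\in G_\lambda$, the elements $a\triangleleft x$ and $b\triangleleft x$ lie in a common group $G_\mu$ and $(ab)\triangleleft x=(a\triangleleft x)(b\triangleleft x)$. For $x\in X$, $G_x$ denotes the group containing $x$, $e_x$ its identity, $x^{-1}$ the inverse of $x$ in $G_x$. $\bigsqcup_{\lambda}(G_\lambda\times G_\lambda)$ is the set of pairs of elements lying in a common group $G_\lambda$. An MCQ isomorphism is a bijection $f$ with $f(x\triangleleft y)=f(x)\triangleleft f(y)$ for all $x,y$ and $f(ab)=f(a)f(b)$ whenever $a,b$ lie in a common group. Rings have a multiplicative identity $1\neq0$ and need not be commutative. Conditions (0-i)–(4-$\phi$) on a 6-tuple $(f_1,f_2,f_3,f_4;\phi_1,\phi_2)$: For all $\lambda$ and $a,b,c\in G_\lambda$: (0-i) $f_3(a,b)$, $f_4(a,b)$ invertible; (0-ii) $f_3(ab,c)f_3(a,b)=f_3(a,bc)$;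 (0-iii) $f_3(ab,c)f_4(a,b)=f_4(a,bc)f_3(b,c)$; (0-iv) $f_4(ab,c)=f_4(a,bc)f_4(b,c)$; (0-$\phi$) $f_3(ab,c)\phi_2(a,b)+\phi_2(ab,c)=f_4(a,bc)\phi_2(b,c)+\phi_2(a,bc)$. For all $a,b\in G_\lambda$: (1-i) $f_1(a,b)=f_4(b^{-1},ab)f_3(a,b)$; (1-ii) $f_3(b,b^{-1}ab)+f_4(b,b^{-1}ab)f_2(a,b)=f_4(a,b)$; (1-$\phi$) $f_4(b,b^{-1}ab)\phi_1(a,b)+\phi_2(b,b^{-1}ab)=\phi_2(a,b)$. For all $x\in X$, $a,b\in G_\lambda$: (2-i) $f_1(x,e_\lambda)=1$; (2-ii) $f_1(x,ab)=f_1(x\triangleleft a,b)f_1(x,a)$; (2-iii) $f_2(x,ab)f_3(a,b)=f_1(x\triangleleft a,b)f_2(x,a)$; (2-iv) $f_2(x,ab)f_4(a,b)=f_2(x\triangleleft a,b)$; (2-$\phi$i) $f_2(x,e_\lambda)\phi_2(e_\lambda,e_\lambda)=\phi_1(x,e_\lambda)$; (2-$\phi$ii) $f_2(x,ab)\phi_2(a,b)+\phi_1(x,ab)=f_1(x\triangleleft a,b)\phi_1(x,a)+\phi_1(x\triangleleft a,b)$. For all $x,y,z\in X$: (3-i) $f_1(x\triangleleft y,z)f_1(x,y)=f_1(x\triangleleft z,y\triangleleft z)f_1(x,z)$; (3-ii) $f_1(x\triangleleft y,z)f_2(x,y)=f_2(x\triangleleft z,y\triangleleft z)f_1(y,z)$;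 (3-iii) $f_2(x\triangleleft y,z)=f_1(x\triangleleft z,y\triangleleft z)f_2(x,z)+f_2(x\triangleleft z,y\triangleleft z)f_2(y,z)$; (3-$\phi$) $f_1(x\triangleleft y,z)\phi_1(x,y)+\phi_1(x\triangleleft y,z)=f_1(x\triangleleft z,y\triangleleft z)\phi_1(x,z)+f_2(x\triangleleft z,y\triangleleft z)\phi_1(y,z)+\phi_1(x\triangleleft z,y\triangleleft z)$. For all $a,b\in G_\lambda$, $x\in X$: (4-i) $f_1(ab,x)f_3(a,b)=f_3(a\triangleleft x,b\triangleleft x)f_1(a,x)$; (4-ii) $f_1(ab,x)f_4(a,b)=f_4(a\triangleleft x,b\triangleleft x)f_1(b,x)$; (4-iii) $f_2(ab,x)=f_3(a\triangleleft x,b\triangleleft x)f_2(a,x)+f_4(a\triangleleft x,b\triangleleft x)f_2(b,x)$; (4-$\phi$) $f_1(ab,x)\phi_2(a,b)+\phi_1(ab,x)=f_3(a\triangleleft x,b\triangleleft x)\phi_1(a,x)+f_4(a\triangleleft x,b\triangleleft x)\phi_1(b,x)+\phi_2(a\triangleleft x,b\triangleleft x)$. For such a 6-tuple, $\widetilde X(f_1,f_2,f_3,f_4;\phi_1,\phi_2)$ is the MCQ $\bigsqcup_\lambda(G_\lambda\times M)$ with $(x,u)\triangleleft(y,v)=(x\triangleleft y,\ f_1(x,y)u+f_2(x,y)v+\phi_1(x,y))$ and, for $a,b\in G_\lambda$, $(a,u)(b,v)=(ab,\ f_3(a,b)u+f_4(a,b)v+\phi_2(a,b))$. An MCQ Alexander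 pair is a pair of maps $g_1,g_2:X\times X\to R$ such that: (A1) for all $a,b\in G_\lambda$: $g_1(a,b)+g_2(a,b)=g_1(a,a^{-1}b)$; (A2) for all $a,b\in G_\lambda$, $x\in X$: $g_1(a,x)=g_1(b,x)$ and $g_2(ab,x)=g_2(a,x)+g_1(b\triangleleft x,a^{-1}\triangleleft x)g_2(b,x)$; (A3) for all $x\in X$, $a,b\in G_\lambda$: $g_1(x,e_\lambda)=1$, $g_1(x,ab)=g_1(x\triangleleft a,b)g_1(x,a)$, $g_2(x,ab)=g_1(x\triangleleft a,b)g_2(x,a)$; (A4) for all $x,y,z\in X$: $g_1(x\triangleleft y,z)g_1(x,y)=g_1(x\triangleleft z,y\triangleleft z)g_1(x,z)$; $g_1(x\triangleleft y,z)g_2(x,y)=g_2(x\triangleleft z,y\triangleleft z)g_1(y,z)$; $g_2(x\triangleleft y,z)=g_1(x\triangleleft z,y\triangleleft z)g_2(x,z)+g_2(x\triangleleft z,y\triangleleft z)g_2(y,z)$. For an MCQ Alexander pair $(g_1,g_2)$, a $(g_1,g_2)$-twisted 2-cocycle is a pair $\psi_1:X\times X\to M$, $\psi_2:\bigsqcup_\lambda(G_\lambda\times G_\lambda)\to M$ with: (T1) for $a,b,c\in G_\lambda$: $\psi_2(a,b)+\psi_2(ab,c)=g_1(a,a^{-1})\psi_2(b,c)+\psi_2(a,bc)$; (T2) for $a,b\in G_\lambda$: $g_1(b,b^{-1})\psi_1(a,b)+\psi_2(b,b^{-1}ab)=\psi_2(a,b)$; (T3) for $x\in X$, $a,b\in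 G_\lambda$: $g_2(x,ab)\psi_2(a,b)+\psi_1(x,ab)=g_1(x\triangleleft a,b)\psi_1(x,a)+\psi_1(x\triangleleft a,b)$; (T4) for $x,y,z\in X$: $g_1(x\triangleleft y,z)\psi_1(x,y)+\psi_1(x\triangleleft y,z)=g_1(x\triangleleft z,y\triangleleft z)\psi_1(x,z)+g_2(x\triangleleft z,y\triangleleft z)\psi_1(y,z)+\psi_1(x\triangleleft z,y\triangleleft z)$; (T5) for $a,b\in G_\lambda$, $x\in X$: $g_1(ab,x)\psi_2(a,b)+\psi_1(ab,x)=\psi_1(a,x)+g_1(a\triangleleft x,a^{-1}\triangleleft x)\psi_1(b,x)+\psi_2(a\triangleleft x,b\triangleleft x)$. $(g_1,g_2;\psi_1,\psi_2)$ is an augmented MCQ Alexander pair if $(g_1,g_2)$ is an MCQ Alexander pair and $(\psi_1,\psi_2)$ is a $(g_1,g_2)$-twisted 2-cocycle. For such a pair, $\widetilde X(g_1,g_2;\psi_1,\psi_2)$ is the MCQ $\bigsqcup_\lambda(G_\lambda\times M)$ with $(x,u)\triangleleft(y,v)=(x\triangleleft y,\ g_1(x,y)u+g_2(x,y)v+\psi_1(x,y))$ and, for $a,b\in G_\lambda$, $(a,u)(b,v)=(ab,\ u+g_1(a,a^{-1})v+\psi_2(a,b))$. *)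

theory Defs
  imports Main
begin

text \<open>An MCQ is given by a carrier X, a labelling lab (x lies in the group G_(lab x)),
  the group multiplication mul (meaningful on pairs with equal label), the identity
  e \<lambda> of G_\<lambda>, the group inverse iv, and the quandle operation tri.\<close>

definition mcq ::
  "'x set \<Rightarrow> ('x \<Rightarrow> 'l) \<Rightarrow> ('x \<Rightarrow> 'x \<Rightarrow> 'x) \<Rightarrow> ('l \<Rightarrow> 'x) \<Rightarrow> ('x \<Rightarrow> 'x)
   \<Rightarrow> ('x \<Rightarrow> 'x \<Rightarrow> 'x) \<Rightarrow> bool" where
  "mcq X lab mul e iv tri \<longleftrightarrow>
    \<comment> \<open>each G_\<lambda> is a group\<close>
    (\<forall>a\<in>X. \<forall>b\<in>X. lab a = lab b \<longrightarrow> mul a b \<in> X \<and> lab (mul a b) = lab a) \<and>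
    (\<forall>a\<in>X. \<forall>b\<in>X. \<forall>c\<in>X. lab a = lab b \<and> lab b = lab c \<longrightarrow>
        mul (mul a b) c = mul a (mul b c)) \<and>
    (\<forall>a\<in>X. e (lab a) \<in> X \<and> lab (e (lab a)) = lab a \<and>
        mul (e (lab a)) a = a \<and> mul a (e (lab a)) = a) \<and>
    (\<forall>a\<in>X. iv a \<in> X \<and> lab (iv a) = lab a \<and>
        mul (iv a) a = e (lab a) \<and> mul a (iv a) = e (lab a)) \<and>
    (\<forall>x\<in>X. \<forall>y\<in>X. tri x y \<in> X) \<and>
    \<comment> \<open>(i)\<close>
    (\<forall>a\<in>X. \<forall>b\<in>X. lab a = lab b \<longrightarrow> tri a b = mul (mul (iv b) a) b) \<and>
    \<comment> \<open>(ii)\<close>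
    (\<forall>x\<in>X. \<forall>a\<in>X. tri x (e (lab a)) = x) \<and>
    (\<forall>x\<in>X. \<forall>a\<in>X. \<forall>b\<in>X. lab a = lab b \<longrightarrow> tri x (mul a b) = tri (tri x a) b) \<and>
    \<comment> \<open>(iii)\<close>
    (\<forall>x\<in>X. \<forall>y\<in>X. \<forall>z\<in>X. tri (tri x y) z = tri (tri x z) (tri y z)) \<and>
    \<comment> \<open>(iv)\<close>
    (\<forall>x\<in>X. \<forall>a\<in>X. \<forall>b\<in>X. lab a = lab b \<longrightarrow>
        lab (tri a x) = lab (tri b x) \<and> tri (mul a b) x = mul (tri a x) (tri b x))"

definition lmodule :: "('r::ring_1 \<Rightarrow> 'm::ab_group_add \<Rightarrow> 'm) \<Rightarrow> bool" where
  "lmodule sm \<longleftrightarrow>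
    (\<forall>r u v. sm r (u + v) = sm r u + sm r v) \<and>
    (\<forall>r s u. sm (r + s) u = sm r u + sm s u) \<and>
    (\<forall>r s u. sm (r * s) u = sm r (sm s u)) \<and>
    (\<forall>u. sm 1 u = u)"

definition invertible_r :: "'r::ring_1 \<Rightarrow> bool" where
  "invertible_r x \<longleftrightarrow> (\<exists>y. x * y = 1 \<and> y * x = 1)"

text \<open>Conditions (0-i)--(4-phi) on (f1,f2,f3,f4;phi1,phi2).  f3, f4, phi2 are only
  meaningful on pairs lying in a common group.\<close>
definition six_cond ::
  "'x set \<Rightarrow> ('x \<Rightarrow> 'l) \<Rightarrow> ('x \<Rightarrow> 'x \<Rightarrow> 'x) \<Rightarrow> ('l \<Rightarrow> 'x) \<Rightarrow> ('x \<Rightarrow> 'x)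
   \<Rightarrow> ('x \<Rightarrow> 'x \<Rightarrow> 'x) \<Rightarrow> ('r::ring_1 \<Rightarrow> 'm::ab_group_add \<Rightarrow> 'm)
   \<Rightarrow> ('x \<Rightarrow> 'x \<Rightarrow> 'r) \<Rightarrow> ('x \<Rightarrow> 'x \<Rightarrow> 'r) \<Rightarrow> ('x \<Rightarrow> 'x \<Rightarrow> 'r) \<Rightarrow> ('x \<Rightarrow> 'x \<Rightarrow> 'r)
   \<Rightarrow> ('x \<Rightarrow> 'x \<Rightarrow> 'm) \<Rightarrow> ('x \<Rightarrow> 'x \<Rightarrow> 'm) \<Rightarrow> bool" where
  "six_cond X lab mul e iv tri sm f1 f2 f3 f4 phi1 phi2 \<longleftrightarrow>
    \<comment> \<open>(0-*)\<close>
    (\<forall>a\<in>X. \<forall>b\<in>X. lab a = lab b \<longrightarrow> invertible_r (f3 a b) \<and> invertible_r (f4 a b)) \<and>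
    (\<forall>a\<in>X. \<forall>b\<in>X. \<forall>c\<in>X. lab a = lab b \<and> lab b = lab c \<longrightarrow>
        f3 (mul a b) c * f3 a b = f3 a (mul b c) \<and>
        f3 (mul a b) c * f4 a b = f4 a (mul b c) * f3 b c \<and>
        f4 (mul a b) c = f4 a (mul b c) * f4 b c \<and>
        sm (f3 (mul a b) c) (phi2 a b) + phi2 (mul a b) c
          = sm (f4 a (mul b c)) (phi2 b c) + phi2 a (mul b c)) \<and>
    \<comment> \<open>(1-*)\<close>
    (\<forall>a\<in>X. \<forall>b\<in>X. lab a = lab b \<longrightarrow>
        f1 a b = f4 (iv b) (mul a b) * f3 a b \<and>
        f3 b (mul (mul (iv b) a) b) + f4 b (mul (mul (iv b) a) b) * f2 a b = f4 a b \<and>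
        sm (f4 b (mul (mul (iv b) a) b)) (phi1 a b) + phi2 b (mul (mul (iv b) a) b)
          = phi2 a b) \<and>
    \<comment> \<open>(2-*)\<close>
    (\<forall>x\<in>X. \<forall>a\<in>X. f1 x (e (lab a)) = 1 \<and>
        sm (f2 x (e (lab a))) (phi2 (e (lab a)) (e (lab a))) = phi1 x (e (lab a))) \<and>
    (\<forall>x\<in>X. \<forall>a\<in>X. \<forall>b\<in>X. lab a = lab b \<longrightarrow>
        f1 x (mul a b) = f1 (tri x a) b * f1 x a \<and>
        f2 x (mul a b) * f3 a b = f1 (tri x a) b * f2 x a \<and>
        f2 x (mul a b) * f4 a b = f2 (tri x a) b \<and>
        sm (f2 x (mul a b)) (phi2 a b) + phi1 x (mul a b)
          = sm (f1 (tri x a) b) (phi1 x a) + phi1 (tri x a) b) \<and>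
    \<comment> \<open>(3-*)\<close>
    (\<forall>x\<in>X. \<forall>y\<in>X. \<forall>z\<in>X.
        f1 (tri x y) z * f1 x y = f1 (tri x z) (tri y z) * f1 x z \<and>
        f1 (tri x y) z * f2 x y = f2 (tri x z) (tri y z) * f1 y z \<and>
        f2 (tri x y) z = f1 (tri x z) (tri y z) * f2 x z + f2 (tri x z) (tri y z) * f2 y z \<and>
        sm (f1 (tri x y) z) (phi1 x y) + phi1 (tri x y) z
          = sm (f1 (tri x z) (tri y z)) (phi1 x z) + sm (f2 (tri x z) (tri y z)) (phi1 y z)
            + phi1 (tri x z) (tri y z)) \<and>
    \<comment> \<open>(4-*)\<close>
    (\<forall>a\<in>X. \<forall>b\<in>X. \<forall>x\<in>X. lab a = lab b \<longrightarrow>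
        f1 (mul a b) x * f3 a b = f3 (tri a x) (tri b x) * f1 a x \<and>
        f1 (mul a b) x * f4 a b = f4 (tri a x) (tri b x) * f1 b x \<and>
        f2 (mul a b) x = f3 (tri a x) (tri b x) * f2 a x + f4 (tri a x) (tri b x) * f2 b x \<and>
        sm (f1 (mul a b) x) (phi2 a b) + phi1 (mul a b) x
          = sm (f3 (tri a x) (tri b x)) (phi1 a x) + sm (f4 (tri a x) (tri b x)) (phi1 b x)
            + phi2 (tri a x) (tri b x))"

definition mcq_alexander_pair ::
  "'x set \<Rightarrow> ('x \<Rightarrow> 'l) \<Rightarrow> ('x \<Rightarrow> 'x \<Rightarrow> 'x) \<Rightarrow> ('l \<Rightarrow> 'x) \<Rightarrow> ('x \<Rightarrow> 'x)
   \<Rightarrow> ('x \<Rightarrow> 'x \<Rightarrow> 'x) \<Rightarrow> ('x \<Rightarrow> 'x \<Rightarrow> 'r::ring_1) \<Rightarrow> ('x \<Rightarrow> 'x \<Rightarrow> 'r) \<Rightarrow> bool" where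
  "mcq_alexander_pair X lab mul e iv tri g1 g2 \<longleftrightarrow>
    \<comment> \<open>(A1)\<close>
    (\<forall>a\<in>X. \<forall>b\<in>X. lab a = lab b \<longrightarrow> g1 a b + g2 a b = g1 a (mul (iv a) b)) \<and>
    \<comment> \<open>(A2)\<close>
    (\<forall>a\<in>X. \<forall>b\<in>X. \<forall>x\<in>X. lab a = lab b \<longrightarrow>
        g1 a x = g1 b x \<and>
        g2 (mul a b) x = g2 a x + g1 (tri b x) (tri (iv a) x) * g2 b x) \<and>
    \<comment> \<open>(A3)\<close>
    (\<forall>x\<in>X. \<forall>a\<in>X. g1 x (e (lab a)) = 1) \<and>
    (\<forall>x\<in>X. \<forall>a\<in>X. \<forall>b\<in>X. lab a = lab b \<longrightarrow>
        g1 x (mul a b) = g1 (tri x a) b * g1 x a \<and>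
        g2 x (mul a b) = g1 (tri x a) b * g2 x a) \<and>
    \<comment> \<open>(A4)\<close>
    (\<forall>x\<in>X. \<forall>y\<in>X. \<forall>z\<in>X.
        g1 (tri x y) z * g1 x y = g1 (tri x z) (tri y z) * g1 x z \<and>
        g1 (tri x y) z * g2 x y = g2 (tri x z) (tri y z) * g1 y z \<and>
        g2 (tri x y) z = g1 (tri x z) (tri y z) * g2 x z + g2 (tri x z) (tri y z) * g2 y z)"

definition twisted_2cocycle ::
  "'x set \<Rightarrow> ('x \<Rightarrow> 'l) \<Rightarrow> ('x \<Rightarrow> 'x \<Rightarrow> 'x) \<Rightarrow> ('l \<Rightarrow> 'x) \<Rightarrow> ('x \<Rightarrow> 'x)
   \<Rightarrow> ('x \<Rightarrow> 'x \<Rightarrow> 'x) \<Rightarrow> ('r::ring_1 \<Rightarrow> 'm::ab_group_add \<Rightarrow> 'm)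
   \<Rightarrow> ('x \<Rightarrow> 'x \<Rightarrow> 'r) \<Rightarrow> ('x \<Rightarrow> 'x \<Rightarrow> 'r) \<Rightarrow> ('x \<Rightarrow> 'x \<Rightarrow> 'm) \<Rightarrow> ('x \<Rightarrow> 'x \<Rightarrow> 'm) \<Rightarrow> bool" where
  "twisted_2cocycle X lab mul e iv tri sm g1 g2 psi1 psi2 \<longleftrightarrow>
    \<comment> \<open>(T1)\<close>
    (\<forall>a\<in>X. \<forall>b\<in>X. \<forall>c\<in>X. lab a = lab b \<and> lab b = lab c \<longrightarrow>
        psi2 a b + psi2 (mul a b) c = sm (g1 a (iv a)) (psi2 b c) + psi2 a (mul b c)) \<and>
    \<comment> \<open>(T2)\<close>
    (\<forall>a\<in>X. \<forall>b\<in>X. lab a = lab b \<longrightarrow>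
        sm (g1 b (iv b)) (psi1 a b) + psi2 b (mul (mul (iv b) a) b) = psi2 a b) \<and>
    \<comment> \<open>(T3)\<close>
    (\<forall>x\<in>X. \<forall>a\<in>X. \<forall>b\<in>X. lab a = lab b \<longrightarrow>
        sm (g2 x (mul a b)) (psi2 a b) + psi1 x (mul a b)
          = sm (g1 (tri x a) b) (psi1 x a) + psi1 (tri x a) b) \<and>
    \<comment> \<open>(T4)\<close>
    (\<forall>x\<in>X. \<forall>y\<in>X. \<forall>z\<in>X.
        sm (g1 (tri x y) z) (psi1 x y) + psi1 (tri x y) z
          = sm (g1 (tri x z) (tri y z)) (psi1 x z) + sm (g2 (tri x z) (tri y z)) (psi1 y z)
            + psi1 (tri x z) (tri y z)) \<and>
    \<comment> \<open>(T5)\<close>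
    (\<forall>a\<in>X. \<forall>b\<in>X. \<forall>x\<in>X. lab a = lab b \<longrightarrow>
        sm (g1 (mul a b) x) (psi2 a b) + psi1 (mul a b) x
          = psi1 a x + sm (g1 (tri a x) (tri (iv a) x)) (psi1 b x) + psi2 (tri a x) (tri b x))"

definition aug_mcq_alexander_pair where
  "aug_mcq_alexander_pair X lab mul e iv tri sm g1 g2 psi1 psi2 \<longleftrightarrow>
    mcq_alexander_pair X lab mul e iv tri g1 g2 \<and>
    twisted_2cocycle X lab mul e iv tri sm g1 g2 psi1 psi2"

definition mcq_iso ::
  "'a set \<Rightarrow> ('a \<Rightarrow> 'l) \<Rightarrow> ('a \<Rightarrow> 'a \<Rightarrow> 'a) \<Rightarrow> ('a \<Rightarrow> 'a \<Rightarrow> 'a)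
   \<Rightarrow> 'b set \<Rightarrow> ('b \<Rightarrow> 'k) \<Rightarrow> ('b \<Rightarrow> 'b \<Rightarrow> 'b) \<Rightarrow> ('b \<Rightarrow> 'b \<Rightarrow> 'b) \<Rightarrow> ('a \<Rightarrow> 'b) \<Rightarrow> bool" where
  "mcq_iso A labA mulA triA B labB mulB triB F \<longleftrightarrow>
    bij_betw F A B \<and>
    (\<forall>x\<in>A. \<forall>y\<in>A. F (triA x y) = triB (F x) (F y)) \<and>
    (\<forall>a\<in>A. \<forall>b\<in>A. labA a = labA b \<longrightarrow>
        labB (F a) = labB (F b) \<and> F (mulA a b) = mulB (F a) (F b))"

text \<open>The extensions X~(f1,f2,f3,f4;phi1,phi2) and X~(g1,g2;psi1,psi2): carrier X \<times> M,
  (x,u) lies in the group G_(lab x) \<times> M.\<close>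
definition ext_tri_f where
  "ext_tri_f tri sm f1 f2 phi1 =
     (\<lambda>(x, u) (y, v). (tri x y, sm (f1 x y) u + sm (f2 x y) v + phi1 x y))"

definition ext_mul_f where
  "ext_mul_f mul sm f3 f4 phi2 =
     (\<lambda>(a, u) (b, v). (mul a b, sm (f3 a b) u + sm (f4 a b) v + phi2 a b))"

definition ext_mul_g where
  "ext_mul_g mul iv sm g1 psi2 =
     (\<lambda>(a, u) (b, v). (mul a b, u + sm (g1 a (iv a)) v + psi2 a b))"

end

theory Submission
  imports Defs
begin

locale T43 =
  fixes X :: "'x set" and lab :: "'x \<Rightarrow> 'l" and mul :: "'x \<Rightarrow> 'x \<Rightarrow> 'x"
    and e :: "'l \<Rightarrow> 'x" and iv :: "'x \<Rightarrow> 'x" and tri :: "'x \<Rightarrow> 'x \<Rightarrow> 'x"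
    and sm :: "'r::ring_1 \<Rightarrow> 'm::ab_group_add \<Rightarrow> 'm"
    and f1 f2 f3 f4 :: "'x \<Rightarrow> 'x \<Rightarrow> 'r" and phi1 phi2 :: "'x \<Rightarrow> 'x \<Rightarrow> 'm"
  assumes M: "mcq X lab mul e iv tri"
    and L: "lmodule sm"
    and S: "six_cond X lab mul e iv tri sm f1 f2 f3 f4 phi1 phi2"
begin

lemma mul_in[simp]: "a \<in> X \<Longrightarrow> b \<in> X \<Longrightarrow> lab a = lab b \<Longrightarrow> mul a b \<in> X"
  using M[unfolded mcq_def, THEN conjunct1] by blast
lemma lab_mul[simp]: "a \<in> X \<Longrightarrow> b \<in> X \<Longrightarrow> lab a = lab b \<Longrightarrow> lab (mul a b) = lab a"
  using M[unfolded mcq_def, THEN conjunct1] by blast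
lemma assoc: "a \<in> X \<Longrightarrow> b \<in> X \<Longrightarrow> c \<in> X \<Longrightarrow> lab a = lab b \<Longrightarrow> lab b = lab c \<Longrightarrow>
    mul (mul a b) c = mul a (mul b c)"
  using M[unfolded mcq_def, THEN conjunct2, THEN conjunct1] by blast
lemma e_in[simp]: "a \<in> X \<Longrightarrow> e (lab a) \<in> X"
  using M[unfolded mcq_def, THEN conjunct2, THEN conjunct2, THEN conjunct1] by blast
lemma lab_e[simp]: "a \<in> X \<Longrightarrow> lab (e (lab a)) = lab a"
  using M[unfolded mcq_def, THEN conjunct2, THEN conjunct2, THEN conjunct1] by blast
lemma e_l[simp]: "a \<in> X \<Longrightarrow> mul (e (lab a)) a = a"
  using M[unfolded mcq_def, THEN conjunct2, THEN conjunct2, THEN conjunct1] by blast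
lemma e_r[simp]: "a \<in> X \<Longrightarrow> mul a (e (lab a)) = a"
  using M[unfolded mcq_def, THEN conjunct2, THEN conjunct2, THEN conjunct1] by blast
lemma iv_in[simp]: "a \<in> X \<Longrightarrow> iv a \<in> X"
  using M[unfolded mcq_def, THEN conjunct2, THEN conjunct2, THEN conjunct2, THEN conjunct1] by blast
lemma lab_iv[simp]: "a \<in> X \<Longrightarrow> lab (iv a) = lab a"
  using M[unfolded mcq_def, THEN conjunct2, THEN conjunct2, THEN conjunct2, THEN conjunct1] by blast
lemma iv_l[simp]: "a \<in> X \<Longrightarrow> mul (iv a) a = e (lab a)"
  using M[unfolded mcq_def, THEN conjunct2, THEN conjunct2, THEN conjunct2, THEN conjunct1] by blast
lemma iv_r[simp]: "a \<in> X \<Longrightarrow> mul a (iv a) = e (lab a)"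
  using M[unfolded mcq_def, THEN conjunct2, THEN conjunct2, THEN conjunct2, THEN conjunct1] by blast
lemma tri_in[simp]: "x \<in> X \<Longrightarrow> y \<in> X \<Longrightarrow> tri x y \<in> X"
  using M[unfolded mcq_def, THEN conjunct2, THEN conjunct2, THEN conjunct2, THEN conjunct2, THEN conjunct1] by blast
lemma tri_conj: "a \<in> X \<Longrightarrow> b \<in> X \<Longrightarrow> lab a = lab b \<Longrightarrow> tri a b = mul (mul (iv b) a) b"
  using M[unfolded mcq_def, THEN conjunct2, THEN conjunct2, THEN conjunct2, THEN conjunct2, THEN conjunct2, THEN conjunct1] by blast
lemma tri_e[simp]: "x \<in> X \<Longrightarrow> a \<in> X \<Longrightarrow> tri x (e (lab a)) = x"
  using M[unfolded mcq_def, THEN conjunct2, THEN conjunct2, THEN conjunct2, THEN conjunct2, THEN conjunct2, THEN conjunct2, THEN conjunct1] by blast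
lemma tri_mul: "x \<in> X \<Longrightarrow> a \<in> X \<Longrightarrow> b \<in> X \<Longrightarrow> lab a = lab b \<Longrightarrow>
    tri x (mul a b) = tri (tri x a) b"
  using M[unfolded mcq_def, THEN conjunct2, THEN conjunct2, THEN conjunct2, THEN conjunct2, THEN conjunct2, THEN conjunct2, THEN conjunct2, THEN conjunct1] by blast
lemma tri_sd: "x \<in> X \<Longrightarrow> y \<in> X \<Longrightarrow> z \<in> X \<Longrightarrow> tri (tri x y) z = tri (tri x z) (tri y z)"
  using M[unfolded mcq_def, THEN conjunct2, THEN conjunct2, THEN conjunct2, THEN conjunct2, THEN conjunct2, THEN conjunct2, THEN conjunct2, THEN conjunct2, THEN conjunct1] by blast
lemma lab_tri: "x \<in> X \<Longrightarrow> a \<in> X \<Longrightarrow> b \<in> X \<Longrightarrow> lab a = lab b \<Longrightarrow> lab (tri a x) = lab (tri b x)"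
  using M[unfolded mcq_def, THEN conjunct2, THEN conjunct2, THEN conjunct2, THEN conjunct2, THEN conjunct2, THEN conjunct2, THEN conjunct2, THEN conjunct2, THEN conjunct2] by blast
lemma tri_hom: "x \<in> X \<Longrightarrow> a \<in> X \<Longrightarrow> b \<in> X \<Longrightarrow> lab a = lab b \<Longrightarrow>
    tri (mul a b) x = mul (tri a x) (tri b x)"
  using M[unfolded mcq_def, THEN conjunct2, THEN conjunct2, THEN conjunct2, THEN conjunct2, THEN conjunct2, THEN conjunct2, THEN conjunct2, THEN conjunct2, THEN conjunct2] by blast

lemma e_l2[simp]: "a \<in> X \<Longrightarrow> lab a = l \<Longrightarrow> mul (e l) a = a" by auto
lemma e_r2[simp]: "a \<in> X \<Longrightarrow> lab a = l \<Longrightarrow> mul a (e l) = a" by auto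

lemma e_lab_eq: "lab a = lab b \<Longrightarrow> e (lab a) = e (lab b)" by simp

lemma canc1[simp]: "a \<in> X \<Longrightarrow> c \<in> X \<Longrightarrow> lab a = lab c \<Longrightarrow> mul a (mul (iv a) c) = c"
  using assoc[of a "iv a" c] by simp
lemma canc2[simp]: "a \<in> X \<Longrightarrow> c \<in> X \<Longrightarrow> lab a = lab c \<Longrightarrow> mul (iv a) (mul a c) = c"
  using assoc[of "iv a" a c] by simp

lemma inv_unique:
  assumes "a \<in> X" "b \<in> X" "lab a = lab b" "mul a b = e (lab a)"
  shows "b = iv a"
proof -
  have "b = mul (iv a) (mul a b)" using assms(1-3) by simp
  also have "\<dots> = mul (iv a) (e (lab a))" using assms(4) by (rule arg_cong)
  also have "\<dots> = iv a" using assms(1) by simp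
  finally show ?thesis .
qed

lemma iv_iv[simp]: "a \<in> X \<Longrightarrow> iv (iv a) = a"
  using inv_unique[of "iv a" a] by simp

lemma iv_mul: assumes "a \<in> X" "b \<in> X" "lab a = lab b"
  shows "iv (mul a b) = mul (iv b) (iv a)"
proof -
  have "mul (mul a b) (mul (iv b) (iv a)) = mul a (mul (mul b (iv b)) (iv a))"
    using assms by (simp add: assoc)
  also have "\<dots> = mul a (iv a)" using assms by (simp only: iv_r e_l2 iv_in lab_iv)
  also have "\<dots> = e (lab (mul a b))" using assms by simp
  finally show ?thesis using assms by (intro inv_unique[symmetric]) auto
qed

lemma iv_e[simp]: "a \<in> X \<Longrightarrow> iv (e (lab a)) = e (lab a)"
  using inv_unique[of "e (lab a)" "e (lab a)"] e_l[of "e (lab a)"] by simp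

lemma tri_e_id: assumes "a \<in> X" "x \<in> X"
  shows "tri (e (lab a)) x = e (lab (tri a x))"
proof -
  let ?E = "tri (e (lab a)) x"
  have EE: "mul ?E ?E = ?E" using assms tri_hom[of x "e (lab a)" "e (lab a)"] e_l[of "e (lab a)"] by simp
  have lE: "lab ?E = lab (tri a x)" using assms lab_tri[of x a "e (lab a)"] by simp
  have "e (lab ?E) = mul (iv ?E) ?E" using assms by simp
  also have "\<dots> = mul (iv ?E) (mul ?E ?E)" using EE by simp
  also have "\<dots> = mul (mul (iv ?E) ?E) ?E" using assms by (simp only: assoc iv_in tri_in e_in lab_iv)
  also have "\<dots> = ?E" using assms by simp
  finally show ?thesis using lE by simp
qed

lemma iv_tri: assumes "a \<in> X" "x \<in> X"
  shows "tri (iv a) x = iv (tri a x)"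
proof (rule inv_unique)
  show "lab (tri a x) = lab (tri (iv a) x)" using assms lab_tri[of x a "iv a"] by simp
  show "mul (tri a x) (tri (iv a) x) = e (lab (tri a x))"
    using assms tri_hom[of x a "iv a"] tri_e_id[of a x] by simp
qed (use assms in auto)

end
context T43 begin

lemma c0: "a \<in> X \<Longrightarrow> b \<in> X \<Longrightarrow> lab a = lab b \<Longrightarrow> invertible_r (f3 a b)"
  using S[unfolded six_cond_def, THEN conjunct1] by blast
lemma c0ii: "a \<in> X \<Longrightarrow> b \<in> X \<Longrightarrow> c \<in> X \<Longrightarrow> lab a = lab b \<Longrightarrow> lab b = lab c \<Longrightarrow>
   f3 (mul a b) c * f3 a b = f3 a (mul b c)"
  using S[unfolded six_cond_def, THEN conjunct2, THEN conjunct1] by blast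
lemma c0iii: "a \<in> X \<Longrightarrow> b \<in> X \<Longrightarrow> c \<in> X \<Longrightarrow> lab a = lab b \<Longrightarrow> lab b = lab c \<Longrightarrow>
   f3 (mul a b) c * f4 a b = f4 a (mul b c) * f3 b c"
  using S[unfolded six_cond_def, THEN conjunct2, THEN conjunct1] by blast
lemma c0iv: "a \<in> X \<Longrightarrow> b \<in> X \<Longrightarrow> c \<in> X \<Longrightarrow> lab a = lab b \<Longrightarrow> lab b = lab c \<Longrightarrow>
   f4 (mul a b) c = f4 a (mul b c) * f4 b c"
  using S[unfolded six_cond_def, THEN conjunct2, THEN conjunct1] by blast
lemma c0phi: "a \<in> X \<Longrightarrow> b \<in> X \<Longrightarrow> c \<in> X \<Longrightarrow> lab a = lab b \<Longrightarrow> lab b = lab c \<Longrightarrow>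
   sm (f3 (mul a b) c) (phi2 a b) + phi2 (mul a b) c
          = sm (f4 a (mul b c)) (phi2 b c) + phi2 a (mul b c)"
  using S[unfolded six_cond_def, THEN conjunct2, THEN conjunct1] by blast
lemma c1i: "a \<in> X \<Longrightarrow> b \<in> X \<Longrightarrow> lab a = lab b \<Longrightarrow> f1 a b = f4 (iv b) (mul a b) * f3 a b"
  using S[unfolded six_cond_def, THEN conjunct2, THEN conjunct2, THEN conjunct1] by blast
lemma c1ii: "a \<in> X \<Longrightarrow> b \<in> X \<Longrightarrow> lab a = lab b \<Longrightarrow>
   f3 b (mul (mul (iv b) a) b) + f4 b (mul (mul (iv b) a) b) * f2 a b = f4 a b"
  using S[unfolded six_cond_def, THEN conjunct2, THEN conjunct2, THEN conjunct1] by blast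
lemma c1phi: "a \<in> X \<Longrightarrow> b \<in> X \<Longrightarrow> lab a = lab b \<Longrightarrow>
   sm (f4 b (mul (mul (iv b) a) b)) (phi1 a b) + phi2 b (mul (mul (iv b) a) b) = phi2 a b"
  using S[unfolded six_cond_def, THEN conjunct2, THEN conjunct2, THEN conjunct1] by blast
lemma c2i: "x \<in> X \<Longrightarrow> a \<in> X \<Longrightarrow> f1 x (e (lab a)) = 1"
  using S[unfolded six_cond_def, THEN conjunct2, THEN conjunct2, THEN conjunct2, THEN conjunct1] by blast
lemma c2ii: "x \<in> X \<Longrightarrow> a \<in> X \<Longrightarrow> b \<in> X \<Longrightarrow> lab a = lab b \<Longrightarrow>
   f1 x (mul a b) = f1 (tri x a) b * f1 x a"
  using S[unfolded six_cond_def, THEN conjunct2, THEN conjunct2, THEN conjunct2, THEN conjunct2, THEN conjunct1] by blast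
lemma c2iii: "x \<in> X \<Longrightarrow> a \<in> X \<Longrightarrow> b \<in> X \<Longrightarrow> lab a = lab b \<Longrightarrow>
   f2 x (mul a b) * f3 a b = f1 (tri x a) b * f2 x a"
  using S[unfolded six_cond_def, THEN conjunct2, THEN conjunct2, THEN conjunct2, THEN conjunct2, THEN conjunct1] by blast
lemma c2phi: "x \<in> X \<Longrightarrow> a \<in> X \<Longrightarrow> b \<in> X \<Longrightarrow> lab a = lab b \<Longrightarrow>
   sm (f2 x (mul a b)) (phi2 a b) + phi1 x (mul a b)
          = sm (f1 (tri x a) b) (phi1 x a) + phi1 (tri x a) b"
  using S[unfolded six_cond_def, THEN conjunct2, THEN conjunct2, THEN conjunct2, THEN conjunct2, THEN conjunct1] by blast
lemma c3i: "x \<in> X \<Longrightarrow> y \<in> X \<Longrightarrow> z \<in> X \<Longrightarrow>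
   f1 (tri x y) z * f1 x y = f1 (tri x z) (tri y z) * f1 x z"
  using S[unfolded six_cond_def, THEN conjunct2, THEN conjunct2, THEN conjunct2, THEN conjunct2, THEN conjunct2, THEN conjunct1] by blast
lemma c3ii: "x \<in> X \<Longrightarrow> y \<in> X \<Longrightarrow> z \<in> X \<Longrightarrow>
   f1 (tri x y) z * f2 x y = f2 (tri x z) (tri y z) * f1 y z"
  using S[unfolded six_cond_def, THEN conjunct2, THEN conjunct2, THEN conjunct2, THEN conjunct2, THEN conjunct2, THEN conjunct1] by blast
lemma c3iii: "x \<in> X \<Longrightarrow> y \<in> X \<Longrightarrow> z \<in> X \<Longrightarrow>
   f2 (tri x y) z = f1 (tri x z) (tri y z) * f2 x z + f2 (tri x z) (tri y z) * f2 y z"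
  using S[unfolded six_cond_def, THEN conjunct2, THEN conjunct2, THEN conjunct2, THEN conjunct2, THEN conjunct2, THEN conjunct1] by blast
lemma c3phi: "x \<in> X \<Longrightarrow> y \<in> X \<Longrightarrow> z \<in> X \<Longrightarrow>
   sm (f1 (tri x y) z) (phi1 x y) + phi1 (tri x y) z
          = sm (f1 (tri x z) (tri y z)) (phi1 x z) + sm (f2 (tri x z) (tri y z)) (phi1 y z)
            + phi1 (tri x z) (tri y z)"
  using S[unfolded six_cond_def, THEN conjunct2, THEN conjunct2, THEN conjunct2, THEN conjunct2, THEN conjunct2, THEN conjunct1] by blast
lemma c4i: "a \<in> X \<Longrightarrow> b \<in> X \<Longrightarrow> x \<in> X \<Longrightarrow> lab a = lab b \<Longrightarrow>
   f1 (mul a b) x * f3 a b = f3 (tri a x) (tri b x) * f1 a x"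
  using S[unfolded six_cond_def, THEN conjunct2, THEN conjunct2, THEN conjunct2, THEN conjunct2, THEN conjunct2, THEN conjunct2] by blast
lemma c4iii: "a \<in> X \<Longrightarrow> b \<in> X \<Longrightarrow> x \<in> X \<Longrightarrow> lab a = lab b \<Longrightarrow>
   f2 (mul a b) x = f3 (tri a x) (tri b x) * f2 a x + f4 (tri a x) (tri b x) * f2 b x"
  using S[unfolded six_cond_def, THEN conjunct2, THEN conjunct2, THEN conjunct2, THEN conjunct2, THEN conjunct2, THEN conjunct2] by blast
lemma c4phi: "a \<in> X \<Longrightarrow> b \<in> X \<Longrightarrow> x \<in> X \<Longrightarrow> lab a = lab b \<Longrightarrow>
   sm (f1 (mul a b) x) (phi2 a b) + phi1 (mul a b) x
          = sm (f3 (tri a x) (tri b x)) (phi1 a x) + sm (f4 (tri a x) (tri b x)) (phi1 b x)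
            + phi2 (tri a x) (tri b x)"
  using S[unfolded six_cond_def, THEN conjunct2, THEN conjunct2, THEN conjunct2, THEN conjunct2, THEN conjunct2, THEN conjunct2] by blast

lemma sm_add: "sm r (u + v) = sm r u + sm r v" using L[unfolded lmodule_def, THEN conjunct1] by blast
lemma sm_radd: "sm (r + s) u = sm r u + sm s u" using L[unfolded lmodule_def, THEN conjunct2, THEN conjunct1] by blast
lemma sm_mult: "sm (r * s) u = sm r (sm s u)" using L[unfolded lmodule_def, THEN conjunct2, THEN conjunct2, THEN conjunct1] by blast
lemma sm_one[simp]: "sm 1 u = u" using L[unfolded lmodule_def, THEN conjunct2, THEN conjunct2, THEN conjunct2] by blast

definition th where "th a = f3 a (iv a)"
definition thi where "thi a = (SOME y. th a * y = 1 \<and> y * th a = 1)"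

lemma th_inv: assumes "a \<in> X" shows "th a * thi a = 1" "thi a * th a = 1"
proof -
  have "invertible_r (th a)" unfolding th_def using assms by (intro c0) auto
  then have "\<exists>y. th a * y = 1 \<and> y * th a = 1" unfolding invertible_r_def .
  then have "th a * thi a = 1 \<and> thi a * th a = 1" unfolding thi_def by (rule someI_ex)
  then show "th a * thi a = 1" "thi a * th a = 1" by auto
qed

lemma th_c1: "a \<in> X \<Longrightarrow> th a * (thi a * r) = r"
  by (simp add: mult.assoc[symmetric] th_inv)
lemma th_c2: "a \<in> X \<Longrightarrow> thi a * (th a * r) = r"
  by (simp add: mult.assoc[symmetric] th_inv)

lemma sm_c1: "a \<in> X \<Longrightarrow> sm (th a) (sm (thi a) u) = u"
  by (simp add: sm_mult[symmetric] th_inv)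
lemma sm_c2: "a \<in> X \<Longrightarrow> sm (thi a) (sm (th a) u) = u"
  by (simp add: sm_mult[symmetric] th_inv)

lemma K1: assumes "a \<in> X" "b \<in> X" "lab a = lab b"
  shows "th (mul a b) * f3 a b = th a"
proof -
  have "mul b (iv (mul a b)) = iv a"
  proof -
    have "mul b (iv (mul a b)) = mul b (mul (iv b) (iv a))" using assms by (simp add: iv_mul)
    also have "\<dots> = mul (mul b (iv b)) (iv a)" using assms by (simp add: assoc)
    also have "\<dots> = iv a" using assms by simp
    finally show ?thesis .
  qed
  then have bc: "mul b (iv (mul a b)) = iv a" .
  have "th (mul a b) * f3 a b = f3 (mul a b) (iv (mul a b)) * f3 a b" by (simp add: th_def)
  also have "\<dots> = f3 a (mul b (iv (mul a b)))"
    by (rule c0ii) (use assms in simp_all)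
  also have "\<dots> = th a" using bc by (simp add: th_def)
  finally show ?thesis .
qed

lemma K1': assumes "a \<in> X" "b \<in> X" "lab a = lab b"
  shows "thi (mul a b) = f3 a b * thi a"
proof -
  have "thi (mul a b) = thi (mul a b) * (th a * thi a)" using assms th_inv by simp
  also have "\<dots> = thi (mul a b) * (th (mul a b) * f3 a b) * thi a"
    using K1[OF assms] by (simp add: mult.assoc)
  also have "\<dots> = f3 a b * thi a" using assms by (simp add: th_c2 mult.assoc)
  finally show ?thesis .
qed

definition k where "k a = f4 a (iv a) * f3 (e (lab a)) (iv a)"

lemma K2: assumes "a \<in> X" "b \<in> X" "lab a = lab b"
  shows "th (mul a b) * f4 a b = k a * th b"
proof -
  let ?c = "iv (mul a b)"
  have c: "?c = mul (iv b) (iv a)" using assms by (simp add: iv_mul)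
  have bc: "mul b ?c = iv a"
  proof -
    have "mul b ?c = mul (mul b (iv b)) (iv a)" using assms c by (simp add: assoc)
    also have "\<dots> = iv a" using assms by simp
    finally show ?thesis .
  qed
  have "th (mul a b) * f4 a b = f3 (mul a b) ?c * f4 a b" by (simp add: th_def)
  also have "\<dots> = f4 a (mul b ?c) * f3 b ?c" by (rule c0iii) (use assms in simp_all)
  also have "\<dots> = f4 a (iv a) * f3 b ?c" using bc by simp
  also have "f3 b ?c = f3 b (mul (iv b) (iv a))" using c by simp
  also have "\<dots> = f3 (mul b (iv b)) (iv a) * f3 b (iv b)" by (rule c0ii[symmetric]) (use assms in simp_all)
  also have "\<dots> = f3 (e (lab a)) (iv a) * th b" using assms by (simp add: th_def)
  finally show ?thesis by (simp add: k_def mult.assoc)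
qed

definition g1 where "g1 x y = th (tri x y) * f1 x y * thi x"
definition g2 where "g2 x y = th (tri x y) * f2 x y * thi y"
definition psi1 where "psi1 x y = sm (th (tri x y)) (phi1 x y)"
definition psi2 where "psi2 a b = sm (th (mul a b)) (phi2 a b)"

lemma tri_iv[simp]: "a \<in> X \<Longrightarrow> tri a (iv a) = a"
proof -
  assume a: "a \<in> X"
  have "tri a (iv a) = mul (mul a a) (iv a)" using a by (simp add: tri_conj)
  also have "\<dots> = a" using a by (simp add: assoc)
  finally show ?thesis .
qed

lemma g1_k: assumes "a \<in> X" shows "g1 a (iv a) = k a"
proof -
  have "f1 a (iv a) = f4 a (e (lab a)) * th a" using assms c1i[of a "iv a"] by (simp add: th_def)
  then have "g1 a (iv a) = th a * f4 a (e (lab a)) * (th a * thi a)" using assms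
    by (simp add: g1_def mult.assoc)
  also have "\<dots> = th a * f4 a (e (lab a))" using assms by (simp add: th_inv)
  also have "\<dots> = f3 (mul a (e (lab a))) (iv a) * f4 a (e (lab a))" using assms by (simp add: th_def)
  also have "\<dots> = f4 a (mul (e (lab a)) (iv a)) * f3 (e (lab a)) (iv a)"
    by (rule c0iii) (use assms in simp_all)
  also have "\<dots> = k a" using assms by (simp add: k_def)
  finally show ?thesis .
qed

end
context T43 begin

lemma mul_tri: assumes "a \<in> X" "b \<in> X" "lab a = lab b"
  shows "mul b (tri a b) = mul a b"
proof -
  have "mul b (tri a b) = mul b (mul (iv b) (mul a b))" using assms by (simp add: tri_conj assoc)
  also have "\<dots> = mul (mul b (iv b)) (mul a b)" using assms by (simp add: assoc)
  also have "\<dots> = mul a b" using assms by simp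
  finally show ?thesis .
qed

lemma tri_eq: assumes "a \<in> X" "b \<in> X" "lab a = lab b"
  shows "tri a b = mul (iv b) (mul a b)" using assms by (simp add: tri_conj assoc)

lemma lab_tri2[simp]: assumes "a \<in> X" "b \<in> X" "lab a = lab b"
  shows "lab (tri a b) = lab a" using assms by (simp add: tri_conj)

lemma g1_k2: assumes "a \<in> X" "b \<in> X" "lab a = lab b"
  shows "g1 a b = k (iv b)"
proof -
  have "th (tri a b) * f4 (iv b) (mul a b) = k (iv b) * th (mul a b)"
    using assms K2[of "iv b" "mul a b"] by (simp add: tri_eq)
  then have "g1 a b = k (iv b) * (th (mul a b) * f3 a b) * thi a"
    using assms by (simp add: g1_def c1i mult.assoc[symmetric])
  then show ?thesis using assms by (simp add: K1 mult.assoc th_inv)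
qed

lemma k_hom: assumes "a \<in> X" "b \<in> X" "lab a = lab b"
  shows "k (mul a b) = k a * k b"
proof -
  have "k (mul a b) * th b = th (mul (mul a b) b) * f4 (mul a b) b"
    using assms by (simp add: K2)
  also have "\<dots> = th (mul a (mul b b)) * f4 a (mul b b) * f4 b b"
    using assms by (simp add: assoc c0iv mult.assoc)
  also have "\<dots> = k a * (th (mul b b) * f4 b b)"
    using assms by (simp add: K2 mult.assoc)
  also have "\<dots> = k a * k b * th b" using assms by (simp add: K2 mult.assoc)
  finally have "k (mul a b) * th b * thi b = k a * k b * th b * thi b" by simp
  then show ?thesis using assms by (simp add: mult.assoc th_inv)
qed

lemma k_e: assumes "a \<in> X" shows "k (e (lab a)) = 1"
proof -
  have "k (e (lab a)) = g1 (e (lab a)) (iv (e (lab a)))" using assms g1_k[of "e (lab a)"] by simp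
  also have "\<dots> = 1" using assms by (simp add: g1_def c2i th_inv)
  finally show ?thesis .
qed

lemma k_ivl: assumes "b \<in> X" shows "k (iv b) * k b = 1"
  using assms k_hom[of "iv b" b] k_e[of b] by simp

lemma one_ii: assumes "a \<in> X" "b \<in> X" "lab a = lab b"
  shows "1 + k b * g2 a b = k a"
proof -
  let ?c = "mul (mul (iv b) a) b"
  have c: "?c = tri a b" using assms by (simp add: tri_conj)
  have bc: "mul b ?c = mul a b" using assms c mul_tri by simp
  have cX: "?c \<in> X" "lab ?c = lab b" using assms c by auto
  have "th (mul a b) * (f3 b ?c + f4 b ?c * f2 a b) = k a * th b"
    using assms c1ii[of a b] K2[of a b] by simp
  then have "th (mul b ?c) * f3 b ?c + th (mul b ?c) * f4 b ?c * f2 a b = k a * th b"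
    using bc by (simp add: distrib_left mult.assoc)
  then have "th b + k b * th ?c * f2 a b = k a * th b"
    using assms cX by (simp add: K1 K2)
  then have "(th b + k b * th ?c * f2 a b) * thi b = k a * th b * thi b" by simp
  then show ?thesis using assms c by (simp add: distrib_right mult.assoc th_inv g2_def)
qed

lemma g1_mul: assumes "a \<in> X" "b \<in> X" "x \<in> X" "lab a = lab b"
  shows "g1 (mul a b) x = g1 a x"
proof -
  have l: "lab (tri a x) = lab (tri b x)" using assms lab_tri by blast
  have "g1 (mul a b) x = th (mul (tri a x) (tri b x)) * (f1 (mul a b) x * f3 a b) * thi a"
    using assms by (simp add: g1_def K1' tri_hom mult.assoc)
  also have "\<dots> = th (mul (tri a x) (tri b x)) * f3 (tri a x) (tri b x) * f1 a x * thi a"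
    using assms by (simp add: c4i mult.assoc)
  also have "\<dots> = g1 a x" using assms l by (simp add: K1 g1_def)
  finally show ?thesis .
qed

lemma alex: "mcq_alexander_pair X lab mul e iv tri g1 g2"
  unfolding mcq_alexander_pair_def
proof (intro conjI ballI impI)
  fix a b assume ab: "a \<in> X" "b \<in> X" "lab a = lab b"
  have g2: "g2 a b = k (iv b) * (k a - 1)"
  proof -
    have "g2 a b = k (iv b) * k b * g2 a b" using ab k_ivl by simp
    also have "\<dots> = k (iv b) * (k a - 1)"
    proof -
      have h: "k a - 1 = k b * g2 a b" using one_ii[OF ab] by (auto simp: algebra_simps)
      show ?thesis by (simp add: h mult.assoc)
    qed
    finally show ?thesis .
  qed
  have "g1 a (mul (iv a) b) = k (iv (mul (iv a) b))" using ab by (simp add: g1_k2)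
  also have "\<dots> = k (iv b) * k a" using ab by (simp add: iv_mul k_hom)
  finally show "g1 a b + g2 a b = g1 a (mul (iv a) b)" using ab g2
    by (simp add: g1_k2 algebra_simps)
next
  fix a b x assume ab: "a \<in> X" "b \<in> X" "x \<in> X" "lab a = lab b"
  show "g1 a x = g1 b x"
    using g1_mul[of "e (lab a)" a x] g1_mul[of "e (lab b)" b x] ab by simp
  have l: "lab (tri a x) = lab (tri b x)" using ab lab_tri by blast
  have gk: "g1 (tri b x) (tri (iv a) x) = k (tri a x)"
    using ab l by (simp add: iv_tri g1_k2)
  have "g2 (mul a b) x = th (mul (tri a x) (tri b x)) * (f3 (tri a x) (tri b x) * f2 a x
       + f4 (tri a x) (tri b x) * f2 b x) * thi x"
    using ab by (simp add: g2_def tri_hom c4iii)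
  also have "\<dots> = th (tri a x) * f2 a x * thi x + k (tri a x) * (th (tri b x) * f2 b x * thi x)"
    using ab l by (simp add: distrib_left distrib_right mult.assoc[symmetric] K1 K2)
  finally show "g2 (mul a b) x = g2 a x + g1 (tri b x) (tri (iv a) x) * g2 b x"
    using gk by (simp add: g2_def)
next
  fix x a assume "x \<in> X" "a \<in> X"
  then show "g1 x (e (lab a)) = 1" by (simp add: g1_def c2i th_inv)
next
  fix x a b assume ab: "x \<in> X" "a \<in> X" "b \<in> X" "lab a = lab b"
  show "g1 x (mul a b) = g1 (tri x a) b * g1 x a"
    using ab by (simp add: g1_def c2ii tri_mul mult.assoc th_c2)
  have "g2 x (mul a b) = th (tri x (mul a b)) * (f2 x (mul a b) * f3 a b) * thi a"
    using ab by (simp add: g2_def K1' mult.assoc)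
  also have "\<dots> = th (tri (tri x a) b) * (f1 (tri x a) b * f2 x a) * thi a"
    by (simp only: c2iii[OF ab] tri_mul[OF ab])
  also have "\<dots> = g1 (tri x a) b * g2 x a"
    using ab by (simp add: g1_def g2_def mult.assoc th_c2)
  finally show "g2 x (mul a b) = g1 (tri x a) b * g2 x a" .
next
  fix x y z assume xyz: "x \<in> X" "y \<in> X" "z \<in> X"
  have sd: "tri (tri x y) z = tri (tri x z) (tri y z)" using xyz by (rule tri_sd)
  have "g1 (tri x y) z * g1 x y = th (tri (tri x y) z) * (f1 (tri x y) z * f1 x y) * thi x"
    using xyz by (simp add: g1_def mult.assoc th_c2)
  also have "\<dots> = th (tri (tri x z) (tri y z)) * (f1 (tri x z) (tri y z) * f1 x z) * thi x"
    by (simp only: c3i[OF xyz] sd)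
  also have "\<dots> = g1 (tri x z) (tri y z) * g1 x z"
    using xyz by (simp add: g1_def mult.assoc th_c2)
  finally show "g1 (tri x y) z * g1 x y = g1 (tri x z) (tri y z) * g1 x z" .
  have "g1 (tri x y) z * g2 x y = th (tri (tri x y) z) * (f1 (tri x y) z * f2 x y) * thi y"
    using xyz by (simp add: g1_def g2_def mult.assoc th_c2)
  also have "\<dots> = th (tri (tri x z) (tri y z)) * (f2 (tri x z) (tri y z) * f1 y z) * thi y"
    by (simp only: c3ii[OF xyz] sd)
  also have "\<dots> = g2 (tri x z) (tri y z) * g1 y z"
    using xyz by (simp add: g1_def g2_def mult.assoc th_c2)
  finally show "g1 (tri x y) z * g2 x y = g2 (tri x z) (tri y z) * g1 y z" .
  have "g2 (tri x y) z = th (tri (tri x y) z) * f2 (tri x y) z * thi z"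
    by (simp add: g2_def)
  also have "\<dots> = th (tri (tri x z) (tri y z)) * (f1 (tri x z) (tri y z) * f2 x z + f2 (tri x z) (tri y z) * f2 y z) * thi z"
    by (simp only: c3iii[OF xyz] sd)
  also have "\<dots> = g1 (tri x z) (tri y z) * g2 x z + g2 (tri x z) (tri y z) * g2 y z"
    using xyz by (simp add: g1_def g2_def mult.assoc th_c2 distrib_left distrib_right)
  finally show "g2 (tri x y) z = g1 (tri x z) (tri y z) * g2 x z + g2 (tri x z) (tri y z) * g2 y z" .
qed

end
context T43 begin

lemma smm: "sm r (sm s u) = sm (r * s) u" by (simp add: sm_mult)

lemma cocyc: "twisted_2cocycle X lab mul e iv tri sm g1 g2 psi1 psi2"
  unfolding twisted_2cocycle_def
proof (intro conjI ballI impI)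
  fix a b c assume abc: "a \<in> X" "b \<in> X" "c \<in> X" "lab a = lab b \<and> lab b = lab c"
  let ?T = "th (mul (mul a b) c)"
  have h1: "?T * f3 (mul a b) c = th (mul a b)" using abc by (simp add: K1)
  have h2: "th (mul a (mul b c)) * f4 a (mul b c) = k a * th (mul b c)" using abc by (simp add: K2)
  have "psi2 a b + psi2 (mul a b) c = sm ?T (sm (f3 (mul a b) c) (phi2 a b) + phi2 (mul a b) c)"
    by (simp add: psi2_def sm_add smm h1)
  also have "\<dots> = sm ?T (sm (f4 a (mul b c)) (phi2 b c) + phi2 a (mul b c))"
    using abc c0phi by simp
  also have "\<dots> = sm (k a) (psi2 b c) + psi2 a (mul b c)"
    using abc by (simp add: psi2_def sm_add smm h2 mult.assoc assoc)
  finally show "psi2 a b + psi2 (mul a b) c = sm (g1 a (iv a)) (psi2 b c) + psi2 a (mul b c)"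
    using abc by (simp add: g1_k)
next
  fix a b assume ab: "a \<in> X" "b \<in> X" "lab a = lab b"
  have cc: "mul (mul (iv b) a) b = tri a b" using ab by (simp add: tri_conj)
  have e0: "sm (f4 b (tri a b)) (phi1 a b) + phi2 b (tri a b) = phi2 a b"
    using c1phi[OF ab] unfolding cc .
  have h: "th (mul a b) * f4 b (tri a b) = k b * th (tri a b)"
    using K2[of b "tri a b"] ab by (simp add: mul_tri)
  have "sm (k b) (psi1 a b) + psi2 b (tri a b)
      = sm (th (mul a b)) (sm (f4 b (tri a b)) (phi1 a b) + phi2 b (tri a b))"
    using ab by (simp add: sm_add smm h psi1_def psi2_def mul_tri)
  also have "\<dots> = psi2 a b" unfolding e0 psi2_def ..
  finally show "sm (g1 b (iv b)) (psi1 a b) + psi2 b (mul (mul (iv b) a) b) = psi2 a b"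
    using ab cc by (simp add: g1_k)
next
  fix x a b assume ab: "x \<in> X" "a \<in> X" "b \<in> X" "lab a = lab b"
  have e1: "g2 x (mul a b) * th (mul a b) = th (tri x (mul a b)) * f2 x (mul a b)"
    using ab by (simp add: g2_def mult.assoc th_inv)
  have e2: "g1 (tri x a) b * th (tri x a) = th (tri (tri x a) b) * f1 (tri x a) b"
    using ab by (simp add: g1_def mult.assoc th_inv)
  have "sm (g2 x (mul a b)) (psi2 a b) + psi1 x (mul a b)
      = sm (th (tri x (mul a b))) (sm (f2 x (mul a b)) (phi2 a b) + phi1 x (mul a b))"
    by (simp add: psi1_def psi2_def smm sm_add e1 mult.assoc)
  also have "\<dots> = sm (th (tri x (mul a b))) (sm (f1 (tri x a) b) (phi1 x a) + phi1 (tri x a) b)"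
    using ab c2phi by simp
  also have "\<dots> = sm (g1 (tri x a) b) (psi1 x a) + psi1 (tri x a) b"
    using ab by (simp add: psi1_def smm sm_add e2 tri_mul)
  finally show "sm (g2 x (mul a b)) (psi2 a b) + psi1 x (mul a b)
          = sm (g1 (tri x a) b) (psi1 x a) + psi1 (tri x a) b" .
next
  fix x y z assume xyz: "x \<in> X" "y \<in> X" "z \<in> X"
  let ?T = "th (tri (tri x y) z)"
  have s: "tri (tri x y) z = tri (tri x z) (tri y z)" using xyz tri_sd by blast
  have e1: "g1 (tri x y) z * th (tri x y) = ?T * f1 (tri x y) z"
    using xyz by (simp add: g1_def mult.assoc th_inv)
  have e2: "g1 (tri x z) (tri y z) * th (tri x z) = ?T * f1 (tri x z) (tri y z)"
    using xyz s by (simp add: g1_def mult.assoc th_inv)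
  have e3: "g2 (tri x z) (tri y z) * th (tri y z) = ?T * f2 (tri x z) (tri y z)"
    using xyz s by (simp add: g2_def mult.assoc th_inv)
  have "sm (g1 (tri x y) z) (psi1 x y) + psi1 (tri x y) z
      = sm ?T (sm (f1 (tri x y) z) (phi1 x y) + phi1 (tri x y) z)"
    by (simp add: psi1_def smm sm_add e1)
  also have "\<dots> = sm ?T (sm (f1 (tri x z) (tri y z)) (phi1 x z) + sm (f2 (tri x z) (tri y z)) (phi1 y z)
            + phi1 (tri x z) (tri y z))"
    using xyz c3phi by simp
  also have "\<dots> = sm (g1 (tri x z) (tri y z)) (psi1 x z) + sm (g2 (tri x z) (tri y z)) (psi1 y z)
            + psi1 (tri x z) (tri y z)"
    using s by (simp add: psi1_def smm sm_add e2 e3)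
  finally show "sm (g1 (tri x y) z) (psi1 x y) + psi1 (tri x y) z
      = sm (g1 (tri x z) (tri y z)) (psi1 x z) + sm (g2 (tri x z) (tri y z)) (psi1 y z)
            + psi1 (tri x z) (tri y z)" .
next
  fix a b x assume ab: "a \<in> X" "b \<in> X" "x \<in> X" "lab a = lab b"
  have l: "lab (tri a x) = lab (tri b x)" using ab lab_tri by blast
  let ?A = "tri a x" and ?B = "tri b x"
  let ?T = "th (mul ?A ?B)"
  have hh: "tri (mul a b) x = mul ?A ?B" using ab tri_hom by blast
  have gk: "g1 ?A (tri (iv a) x) = k ?A" using ab by (simp add: iv_tri g1_k)
  have e1: "g1 (mul a b) x * th (mul a b) = ?T * f1 (mul a b) x"
    using ab hh by (simp add: g1_def mult.assoc th_inv)
  have h1: "?T * f3 ?A ?B = th ?A" using ab l by (simp add: K1)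
  have h2: "?T * f4 ?A ?B = k ?A * th ?B" using ab l by (simp add: K2)
  have "sm (g1 (mul a b) x) (psi2 a b) + psi1 (mul a b) x
      = sm ?T (sm (f1 (mul a b) x) (phi2 a b) + phi1 (mul a b) x)"
    using hh by (simp add: psi1_def psi2_def smm sm_add e1 mult.assoc)
  also have "\<dots> = sm ?T (sm (f3 ?A ?B) (phi1 a x) + sm (f4 ?A ?B) (phi1 b x) + phi2 ?A ?B)"
    using ab c4phi by simp
  also have "\<dots> = psi1 a x + sm (k ?A) (psi1 b x) + psi2 ?A ?B"
    by (simp add: psi1_def psi2_def smm sm_add h1 h2 mult.assoc)
  finally show "sm (g1 (mul a b) x) (psi2 a b) + psi1 (mul a b) x
          = psi1 a x + sm (g1 ?A (tri (iv a) x)) (psi1 b x) + psi2 ?A ?B"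
    using gk by simp
qed

definition FF where "FF = (\<lambda>(x, u). (x, sm (th x) u))"

lemma iso: "mcq_iso (X \<times> UNIV) (lab \<circ> fst) (ext_mul_f mul sm f3 f4 phi2)
                   (ext_tri_f tri sm f1 f2 phi1)
                 (X \<times> UNIV) (lab \<circ> fst) (ext_mul_g mul iv sm g1 psi2)
                   (ext_tri_f tri sm g1 g2 psi1) FF"
  unfolding mcq_iso_def
proof (intro conjI ballI impI)
  show "bij_betw FF (X \<times> UNIV) (X \<times> UNIV)"
    by (rule bij_betw_byWitness[where f'="\<lambda>(x, u). (x, sm (thi x) u)"])
       (auto simp: FF_def sm_c1 sm_c2)
next
  fix p q assume pq: "p \<in> X \<times> (UNIV :: 'm set)" "q \<in> X \<times> (UNIV :: 'm set)"
  obtain x u where p: "p = (x, u)" "x \<in> X" using pq by auto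
  obtain y v where q: "q = (y, v)" "y \<in> X" using pq by auto
  have e1: "g1 x y * th x = th (tri x y) * f1 x y" using p by (simp add: g1_def mult.assoc th_inv)
  have e2: "g2 x y * th y = th (tri x y) * f2 x y" using q by (simp add: g2_def mult.assoc th_inv)
  show "FF (ext_tri_f tri sm f1 f2 phi1 p q) = ext_tri_f tri sm g1 g2 psi1 (FF p) (FF q)"
    using p q by (simp add: FF_def ext_tri_f_def sm_add smm e1 e2 psi1_def)
next
  fix p q assume pq: "p \<in> X \<times> (UNIV :: 'm set)" "q \<in> X \<times> (UNIV :: 'm set)"
    and l: "(lab \<circ> fst) p = (lab \<circ> fst) q"
  obtain a u where p: "p = (a, u)" "a \<in> X" using pq by auto
  obtain b v where q: "q = (b, v)" "b \<in> X" using pq by auto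
  have ab: "lab a = lab b" using l p q by simp
  show "(lab \<circ> fst) (FF p) = (lab \<circ> fst) (FF q)" using l p q by (simp add: FF_def)
  show "FF (ext_mul_f mul sm f3 f4 phi2 p q) = ext_mul_g mul iv sm g1 psi2 (FF p) (FF q)"
    using p q ab by (simp add: FF_def ext_mul_f_def ext_mul_g_def sm_add smm K1 K2 g1_k psi2_def)
qed

end
theorem theorem4p3:
  fixes X :: "'x set" and lab :: "'x \<Rightarrow> 'l" and mul :: "'x \<Rightarrow> 'x \<Rightarrow> 'x"
    and e :: "'l \<Rightarrow> 'x" and iv :: "'x \<Rightarrow> 'x" and tri :: "'x \<Rightarrow> 'x \<Rightarrow> 'x"
    and sm :: "'r::ring_1 \<Rightarrow> 'm::ab_group_add \<Rightarrow> 'm"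
    and f1 f2 f3 f4 :: "'x \<Rightarrow> 'x \<Rightarrow> 'r" and phi1 phi2 :: "'x \<Rightarrow> 'x \<Rightarrow> 'm"
  assumes "mcq X lab mul e iv tri"
    and "lmodule sm"
    and "six_cond X lab mul e iv tri sm f1 f2 f3 f4 phi1 phi2"
  shows "\<exists>(g1 :: 'x \<Rightarrow> 'x \<Rightarrow> 'r) (g2 :: 'x \<Rightarrow> 'x \<Rightarrow> 'r) (psi1 :: 'x \<Rightarrow> 'x \<Rightarrow> 'm)
           (psi2 :: 'x \<Rightarrow> 'x \<Rightarrow> 'm).
           aug_mcq_alexander_pair X lab mul e iv tri sm g1 g2 psi1 psi2 \<and>
           (\<exists>F. mcq_iso (X \<times> UNIV) (lab \<circ> fst) (ext_mul_f mul sm f3 f4 phi2)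
                   (ext_tri_f tri sm f1 f2 phi1)
                 (X \<times> UNIV) (lab \<circ> fst) (ext_mul_g mul iv sm g1 psi2)
                   (ext_tri_f tri sm g1 g2 psi1) F)"
proof -
  interpret T: T43 X lab mul e iv tri sm f1 f2 f3 f4 phi1 phi2 by (rule T43.intro) (rule assms)+
  have A: "aug_mcq_alexander_pair X lab mul e iv tri sm T.g1 T.g2 T.psi1 T.psi2"
    unfolding aug_mcq_alexander_pair_def by (rule conjI[OF T.alex T.cocyc])
  show ?thesis
    by (rule exI[of _ T.g1], rule exI[of _ T.g2], rule exI[of _ T.psi1], rule exI[of _ T.psi2],
        rule conjI[OF A], rule exI[of _ T.FF], rule T.iso)
qed

end
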